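(* Let $(X,d_X)$ be a metric space and $(Y,d_Y)$ a metric space with the coarse Stone property, i.e. $\Delta_Y^{(c)}(R)<\infty$ for all $R\in[0,\infty)$. If there exists a coarse embedding $f\colon X\to Y$, then $X$ has the coarse Stone property, i.e. $\Delta_X^{(c)}(R)<\infty$ for all $R\in[0,\infty)$. If $f$ is a coarse Lipschitz embedding and there are $C,D\in[0,\infty)$ such that $\Delta_Y^{(c)}(R)\leq CR+D$ for all $R\in[0,\infty)$, then there are $C',D'\in[0,\infty)$ such that $\Delta_X^{(c)}(R)<C'R+D'$ for all $R\in[0,\infty)$. If, in particular, $f$ is a bi-Lipschitz embedding and $D=0$, then $\Delta_X^{(c)}(R)\leq C\,\mathrm{dist}(f)\,R$ for all $R\in[0,\infty)$.
   Context: For a metric space $X$ and a cover $\mathcal{U}$ of $X$: $\mathrm{diam}(\mathcal{U})=\sup_{U\in\mathcal{U}}\mathrm{diam}(U)$; $\mathcal{L}(\mathcal{U})=\sup\{d\in[0,\infty): \text{every } E\subseteq X \text{ with } \mathrm{diam}(E)<d \text{ is contained in some } U\in\mathcal{U}\}$; $\mathcal{U}$ is point-finite if each point lies in only finitely many members. $\Delta_X^{(c)}(R)=\inf\{\mathrm{diam}(\mathcal{U}): \mathcal{U} \text{ a point-finite cover of } X,\ \mathcal{L}(\mathcal{U})\geq R\}$. For $f\colon X\to Y$: $\omega_f(t)=\sup\{d_Y(f(x_1),f(x_2)): d_X(x_1,x_2)\leq t\}$, $\rho_f(t)=\inf\{d_Y(f(x_1),f(x_2)): d_X(x_1,x_2)\geq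 t\}$; $f$ is a coarse embedding if $\omega_f(t)<\infty$ for all $t$ and $\lim_{t\to\infty}\rho_f(t)=\infty$; a coarse Lipschitz embedding if there are $A\geq1$, $B\geq0$ with $\omega_f(t)\leq At+B$ and $\rho_f(t)\geq t/A-B$ for all $t$; a bi-Lipschitz embedding if this holds with $B=0$. $\mathrm{Lip}(f)=\sup_{x_1\neq x_2} d_Y(f(x_1),f(x_2))/d_X(x_1,x_2)$ and for injective $f$, $\mathrm{dist}(f)=\mathrm{Lip}(f)\mathrm{Lip}(f^{-1})$. *)

theory Defs
  imports "HOL-Analysis.Analysis"
begin

text \<open>Diameter of a set, valued in [0,\<infinity>] (empty set has diameter 0).\<close>
definition ediam :: "'a::metric_space set \<Rightarrow> ennreal" where
  "ediam U = (SUP x\<in>U. SUP y\<in>U. ennreal (dist x y))"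

definition cover_diam :: "'a::metric_space set set \<Rightarrow> ennreal" where
  "cover_diam \<U> = (SUP U\<in>\<U>. ediam U)"

definition lebesgue_num :: "'a::metric_space set \<Rightarrow> 'a set set \<Rightarrow> ennreal" where
  "lebesgue_num X \<U> = Sup {ennreal d | d. d \<ge> 0 \<and>
      (\<forall>E. E \<subseteq> X \<longrightarrow> ediam E < ennreal d \<longrightarrow> (\<exists>U\<in>\<U>. E \<subseteq> U))}"

definition is_cover :: "'a set \<Rightarrow> 'a set set \<Rightarrow> bool" where
  "is_cover X \<U> \<longleftrightarrow> (\<forall>U\<in>\<U>. U \<subseteq> X) \<and> \<Union>\<U> = X"

definition point_finite :: "'a set set \<Rightarrow> bool" where
  "point_finite \<U> \<longleftrightarrow> (\<forall>x. finite {U\<in>\<U>. x \<in> U})"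

definition Delta_c :: "'a::metric_space set \<Rightarrow> real \<Rightarrow> ennreal" where
  "Delta_c X R = (INF \<U>\<in>{\<U>. is_cover X \<U> \<and> point_finite \<U> \<and> lebesgue_num X \<U> \<ge> ennreal R}.
                    cover_diam \<U>)"

definition coarse_stone :: "'a::metric_space set \<Rightarrow> bool" where
  "coarse_stone X \<longleftrightarrow> (\<forall>R\<ge>0. Delta_c X R < \<infinity>)"

definition omega_f :: "('a::metric_space \<Rightarrow> 'b::metric_space) \<Rightarrow> real \<Rightarrow> ennreal" where
  "omega_f f t = (SUP p\<in>{(x1,x2). dist x1 x2 \<le> t}. ennreal (dist (f (fst p)) (f (snd p))))"

definition rho_f :: "('a::metric_space \<Rightarrow> 'b::metric_space) \<Rightarrow> real \<Rightarrow> ennreal" where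
  "rho_f f t = (INF p\<in>{(x1,x2). dist x1 x2 \<ge> t}. ennreal (dist (f (fst p)) (f (snd p))))"

definition coarse_embedding :: "('a::metric_space \<Rightarrow> 'b::metric_space) \<Rightarrow> bool" where
  "coarse_embedding f \<longleftrightarrow> (\<forall>t. omega_f f t < \<infinity>) \<and> (rho_f f \<longlongrightarrow> \<infinity>) at_top"

definition coarse_lipschitz_embedding :: "('a::metric_space \<Rightarrow> 'b::metric_space) \<Rightarrow> bool" where
  "coarse_lipschitz_embedding f \<longleftrightarrow> (\<exists>A B. A \<ge> 1 \<and> B \<ge> 0 \<and>
     (\<forall>t\<ge>0. omega_f f t \<le> ennreal (A * t + B) \<and> rho_f f t \<ge> ennreal (t / A - B)))"

definition bi_lipschitz_embedding :: "('a::metric_space \<Rightarrow> 'b::metric_space) \<Rightarrow> bool" where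
  "bi_lipschitz_embedding f \<longleftrightarrow> (\<exists>A. A \<ge> 1 \<and>
     (\<forall>t\<ge>0. omega_f f t \<le> ennreal (A * t) \<and> rho_f f t \<ge> ennreal (t / A)))"

definition Lip :: "('a::metric_space \<Rightarrow> 'b::metric_space) \<Rightarrow> ennreal" where
  "Lip f = (SUP p\<in>{(x1,x2). x1 \<noteq> x2}. ennreal (dist (f (fst p)) (f (snd p)) / dist (fst p) (snd p)))"

definition Lip_inv :: "('a::metric_space \<Rightarrow> 'b::metric_space) \<Rightarrow> ennreal" where
  "Lip_inv f = (SUP p\<in>{(x1,x2). x1 \<noteq> x2}. ennreal (dist (fst p) (snd p) / dist (f (fst p)) (f (snd p))))"

definition distortion :: "('a::metric_space \<Rightarrow> 'b::metric_space) \<Rightarrow> ennreal" where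
  "distortion f = Lip f * Lip_inv f"

end

theory Submission
  imports Defs
begin

lemma ediam_elem: "x \<in> V \<Longrightarrow> y \<in> V \<Longrightarrow> ennreal (dist x y) \<le> ediam V"
  unfolding ediam_def by (rule SUP_upper2[where i=x], simp, rule SUP_upper2[where i=y], auto)

lemma leb_use:
  assumes "lebesgue_num X \<U> \<ge> ennreal R" "E \<subseteq> X" "ediam E < ennreal R"
  shows "\<exists>U\<in>\<U>. E \<subseteq> U"
proof -
  have "ediam E < lebesgue_num X \<U>" using assms by order
  then obtain s where "s \<in> {ennreal d | d. d \<ge> 0 \<and>
      (\<forall>E. E \<subseteq> X \<longrightarrow> ediam E < ennreal d \<longrightarrow> (\<exists>U\<in>\<U>. E \<subseteq> U))}" "ediam E < s"
    unfolding lebesgue_num_def by (auto simp: less_Sup_iff)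
  then show ?thesis using assms(2) by auto
qed

lemma delta_get: "Delta_c X R < a \<Longrightarrow> \<exists>U. is_cover X U \<and> point_finite U \<and> lebesgue_num X U \<ge> ennreal R \<and> cover_diam U < a"
  by (auto simp: Delta_c_def INF_less_iff)

lemma delta_le: "is_cover X U \<Longrightarrow> point_finite U \<Longrightarrow> lebesgue_num X U \<ge> ennreal R \<Longrightarrow> Delta_c X R \<le> cover_diam U"
  by (auto simp: Delta_c_def intro!: INF_lower)

lemma transfer:
  fixes f :: "'a::metric_space \<Rightarrow> 'b::metric_space"
  assumes R: "R \<ge> 0" and w: "w \<ge> 0" "w < R'" and om: "\<forall>x y. dist x y < R \<longrightarrow> dist (f x) (f y) \<le> w"
    and D: "Delta_c (UNIV::'b set) R' < ennreal S" and S: "S \<ge> 0"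
    and rh: "\<forall>x y. dist (f x) (f y) \<le> S \<longrightarrow> dist x y \<le> T"
  shows "Delta_c (UNIV::'a set) R \<le> ennreal T"
proof -
  obtain \<V> where V: "is_cover (UNIV::'b set) \<V>" "point_finite \<V>" "lebesgue_num UNIV \<V> \<ge> ennreal R'"
    "cover_diam \<V> < ennreal S" using delta_get[OF D] by blast
  define \<U> where "\<U> = (\<lambda>V. f -` V) ` \<V>"
  have c: "is_cover (UNIV::'a set) \<U>" using V(1) unfolding is_cover_def \<U>_def by (auto, metis UNIV_I Union_iff)
  have pf: "point_finite \<U>"
    unfolding point_finite_def
  proof
    fix x
    have "{U\<in>\<U>. x \<in> U} \<subseteq> (\<lambda>V. f -` V) ` {V\<in>\<V>. f x \<in> V}" unfolding \<U>_def by auto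
    moreover have "finite {V\<in>\<V>. f x \<in> V}" using V(2) unfolding point_finite_def by auto
    ultimately show "finite {U\<in>\<U>. x \<in> U}" by (meson finite_imageI finite_subset)
  qed
  have leb: "lebesgue_num UNIV \<U> \<ge> ennreal R"
    unfolding lebesgue_num_def
  proof (rule Sup_upper, safe)
    show "\<exists>d. ennreal R = ennreal d \<and> 0 \<le> d \<and> (\<forall>E. E \<subseteq> UNIV \<longrightarrow> ediam E < ennreal d \<longrightarrow> (\<exists>U\<in>\<U>. E \<subseteq> U))"
    proof (intro exI conjI allI impI)
      fix E :: "'a set"
      assume "ediam E < ennreal R"
      have "ediam (f ` E) \<le> ennreal w"
        unfolding ediam_def
      proof (rule SUP_least, rule SUP_least)
        fix a b assume "a \<in> f ` E" "b \<in> f ` E"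
        then obtain x y where xy: "x \<in> E" "y \<in> E" "a = f x" "b = f y" by auto
        have "ennreal (dist x y) < ennreal R" using ediam_elem[OF xy(1,2)] \<open>ediam E < ennreal R\<close> by order
        hence "dist x y < R" by (simp add: ennreal_less_iff)
        thus "ennreal (dist a b) \<le> ennreal w" using om xy by (auto intro: ennreal_leI)
      qed
      also have "\<dots> < ennreal R'" using w by (simp add: ennreal_lessI)
      finally have "\<exists>V\<in>\<V>. f ` E \<subseteq> V" using leb_use[OF V(3)] by auto
      thus "\<exists>U\<in>\<U>. E \<subseteq> U" unfolding \<U>_def by auto
    qed (use R in auto)
  qed
  have "cover_diam \<U> \<le> ennreal T"
    unfolding cover_diam_def
  proof (rule SUP_least)
    fix U assume "U \<in> \<U>"
    then obtain V where V': "V \<in> \<V>" "U = f -` V" unfolding \<U>_def by auto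
    have eV: "ediam V \<le> ennreal S" using V(4) V'(1) unfolding cover_diam_def
      by (meson SUP_upper order.strict_implies_order order_trans)
    show "ediam U \<le> ennreal T"
      unfolding ediam_def
    proof (rule SUP_least, rule SUP_least)
      fix x y assume "x \<in> U" "y \<in> U"
      hence "ennreal (dist (f x) (f y)) \<le> ennreal S" using ediam_elem[of "f x" V "f y"] V' eV by auto
      hence "dist (f x) (f y) \<le> S" using S by (simp add: ennreal_le_iff)
      thus "ennreal (dist x y) \<le> ennreal T" using rh by (auto intro: ennreal_leI)
    qed
  qed
  with delta_le[OF c pf leb] show ?thesis by order
qed


lemma omega_use: "dist x y \<le> t \<Longrightarrow> ennreal (dist (f x) (f y)) \<le> omega_f f t"
  unfolding omega_f_def by (rule SUP_upper2[where i="(x,y)"]) auto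

lemma rho_use: "dist x y \<ge> t \<Longrightarrow> rho_f f t \<le> ennreal (dist (f x) (f y))"
  unfolding rho_f_def by (rule INF_lower2[where i="(x,y)"]) auto

lemma part1:
  fixes f :: "'a::metric_space \<Rightarrow> 'b::metric_space"
  assumes "coarse_stone (UNIV :: 'b set)" "coarse_embedding f"
  shows "coarse_stone (UNIV :: 'a set)"
  unfolding coarse_stone_def
proof (intro allI impI)
  fix R :: real assume R: "R \<ge> 0"
  have fin: "omega_f f R < \<infinity>" using assms(2) unfolding coarse_embedding_def by auto
  define w where "w = enn2real (omega_f f R)"
  have w0: "w \<ge> 0" unfolding w_def by simp
  have om: "\<forall>x y. dist x y < R \<longrightarrow> dist (f x) (f y) \<le> w"
  proof (intro allI impI)
    fix x y :: 'a assume "dist x y < R"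
    hence "ennreal (dist (f x) (f y)) \<le> omega_f f R" by (intro omega_use) auto
    also have "\<dots> = ennreal w" using fin unfolding w_def by (simp add: less_top)
    finally show "dist (f x) (f y) \<le> w" using w0 by (simp add: ennreal_le_iff)
  qed
  have "Delta_c (UNIV::'b set) (w+1) < \<infinity>" using assms(1) w0 unfolding coarse_stone_def by auto
  define S where "S = enn2real (Delta_c (UNIV::'b set) (w+1)) + 1"
  have S0: "S \<ge> 0" unfolding S_def by simp
  have DS: "Delta_c (UNIV::'b set) (w+1) < ennreal S"
  proof -
    let ?d = "Delta_c (UNIV::'b set) (w+1)"
    have "?d = ennreal (enn2real ?d)" using \<open>?d < \<infinity>\<close> by (simp add: less_top)
    also have "\<dots> < ennreal (enn2real ?d + 1)" by (rule ennreal_lessI) (auto intro: add_nonneg_pos)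
    finally show ?thesis by (simp add: S_def)
  qed
  have "(rho_f f \<longlongrightarrow> \<infinity>) at_top" using assms(2) unfolding coarse_embedding_def by auto
  hence "eventually (\<lambda>t. ennreal S < rho_f f t) at_top" by (rule order_tendstoD) simp
  then obtain N where N: "\<And>t. t \<ge> N \<Longrightarrow> ennreal S < rho_f f t" by (auto simp: eventually_at_top_linorder)
  define T where "T = max N 0"
  have rh: "\<forall>x y. dist (f x) (f y) \<le> S \<longrightarrow> dist x y \<le> T"
  proof (intro allI impI)
    fix x y :: 'a assume h: "dist (f x) (f y) \<le> S"
    show "dist x y \<le> T"
    proof (rule ccontr)
      assume "\<not> dist x y \<le> T"
      hence "rho_f f T \<le> ennreal (dist (f x) (f y))" by (intro rho_use) auto
      also have "\<dots> \<le> ennreal S" using h by (rule ennreal_leI)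
      moreover have "ennreal S < rho_f f T" by (rule N) (simp add: T_def)
      ultimately show False by simp
    qed
  qed
  have "Delta_c (UNIV::'a set) R \<le> ennreal T" by (rule transfer[OF R w0 _ om DS S0 rh]) simp
  thus "Delta_c (UNIV::'a set) R < \<infinity>" by (simp add: le_less_trans)
qed


lemma part2:
  fixes f :: "'a::metric_space \<Rightarrow> 'b::metric_space"
  assumes "coarse_lipschitz_embedding f"
    "C \<ge> 0" "D \<ge> 0" "\<forall>R\<ge>0. Delta_c (UNIV :: 'b set) R \<le> ennreal (C * R + D)"
  shows "\<exists>C' D'. C' \<ge> 0 \<and> D' \<ge> 0 \<and>
                   (\<forall>R\<ge>0. Delta_c (UNIV :: 'a set) R < ennreal (C' * R + D'))"
proof -
  obtain A B where AB: "A \<ge> 1" "B \<ge> 0"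
    "\<And>t. t \<ge> 0 \<Longrightarrow> omega_f f t \<le> ennreal (A * t + B) \<and> rho_f f t \<ge> ennreal (t / A - B)"
    using assms(1) unfolding coarse_lipschitz_embedding_def by blast
  show ?thesis
  proof (intro exI conjI allI impI)
    show "A * C * A \<ge> 0" using AB assms by simp
    show "A * (C * (B + 1) + D + B + 2) + 1 \<ge> 0" using AB assms by simp
    fix R :: real assume R: "R \<ge> 0"
    define w where "w = A * R + B"
    have w0: "w \<ge> 0" using AB R unfolding w_def by simp
    have om: "\<forall>x y. dist x y < R \<longrightarrow> dist (f x) (f y) \<le> w"
    proof (intro allI impI)
      fix x y :: 'a assume "dist x y < R"
      hence "ennreal (dist (f x) (f y)) \<le> omega_f f R" by (intro omega_use) auto
      also have "\<dots> \<le> ennreal w" using AB(3)[OF R] unfolding w_def by auto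
      finally show "dist (f x) (f y) \<le> w" using w0 by (simp add: ennreal_le_iff)
    qed
    define S where "S = C * (w + 1) + D + 1"
    have S0: "S \<ge> 0" using assms w0 unfolding S_def by simp
    have DS: "Delta_c (UNIV::'b set) (w+1) < ennreal S"
    proof -
      have "Delta_c (UNIV::'b set) (w+1) \<le> ennreal (C * (w+1) + D)" using assms(4) w0 by auto
      also have "\<dots> < ennreal S" unfolding S_def by (rule ennreal_lessI) (use assms w0 in \<open>auto intro!: add_nonneg_pos\<close>)
      finally show ?thesis .
    qed
    define T where "T = A * (S + B + 1)"
    have T0: "T \<ge> 0" using AB S0 unfolding T_def by simp
    have rh: "\<forall>x y. dist (f x) (f y) \<le> S \<longrightarrow> dist x y \<le> T"
    proof (intro allI impI)
      fix x y :: 'a assume h: "dist (f x) (f y) \<le> S"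
      show "dist x y \<le> T"
      proof (rule ccontr)
        assume "\<not> dist x y \<le> T"
        hence "rho_f f T \<le> ennreal (dist (f x) (f y))" by (intro rho_use) auto
        also have "\<dots> \<le> ennreal S" using h by (rule ennreal_leI)
        also have "\<dots> < ennreal (T / A - B)"
        proof (rule ennreal_lessI)
          have "T / A - B = S + 1" using AB unfolding T_def by simp
          thus "0 < T / A - B" "S < T / A - B" using S0 by auto
        qed
        also have "\<dots> \<le> rho_f f T" using AB(3)[OF T0] by auto
        finally show False by simp
      qed
    qed
    have "Delta_c (UNIV::'a set) R \<le> ennreal T" by (rule transfer[OF R w0 _ om DS S0 rh]) simp
    also have "\<dots> < ennreal (A * C * A * R + (A * (C * (B + 1) + D + B + 2) + 1))"
    proof (rule ennreal_lessI)
      have "T = A * C * A * R + A * (C * (B + 1) + D + B + 2)"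
        unfolding T_def S_def w_def by (simp add: algebra_simps)
      thus "T < A * C * A * R + (A * (C * (B + 1) + D + B + 2) + 1)" by simp
      show "0 < A * C * A * R + (A * (C * (B + 1) + D + B + 2) + 1)"
        using AB assms R by (intro add_nonneg_pos) auto
    qed
    finally show "Delta_c (UNIV::'a set) R < ennreal (A * C * A * R + (A * (C * (B + 1) + D + B + 2) + 1))" .
  qed
qed


lemma eps_limit:
  assumes "\<And>e. e > 0 \<Longrightarrow> x \<le> ennreal (a + K * e)" "K \<ge> 0" "a \<ge> 0"
  shows "x \<le> ennreal a"
proof -
  have "x \<le> ennreal (a + K * 1)" using assms(1)[of 1] by simp
  hence "x < \<infinity>" using le_less_trans by fastforce
  then obtain r where r: "x = ennreal r" "r \<ge> 0" by (cases x) auto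
  have "r \<le> a"
  proof (rule field_le_epsilon)
    fix e :: real assume e: "e > 0"
    have "e / (K + 1) > 0" using e assms by simp
    hence "ennreal r \<le> ennreal (a + K * (e / (K + 1)))" using assms(1)[of "e / (K + 1)"] r by metis
    hence "r \<le> a + K * (e / (K + 1))" using assms e by (subst (asm) ennreal_le_iff) (auto intro!: add_nonneg_nonneg)
    also have "K * (e / (K + 1)) \<le> e"
    proof -
      have "K * (e / (K + 1)) = e * (K / (K + 1))" by simp
      also have "\<dots> \<le> e * 1" using e assms by (intro mult_left_mono) auto
      finally show ?thesis by simp
    qed
    finally show "r \<le> a + e" by simp
  qed
  thus ?thesis using r by (simp add: ennreal_leI)
qed

lemma part3:
  fixes f :: "'a::metric_space \<Rightarrow> 'b::metric_space"
  assumes C: "C \<ge> 0" and bl: "bi_lipschitz_embedding f"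
    and DY: "\<forall>R\<ge>0. Delta_c (UNIV :: 'b set) R \<le> ennreal (C * R)"
    and R: "R \<ge> 0"
  shows "Delta_c (UNIV :: 'a set) R \<le> ennreal C * distortion f * ennreal R"
proof -
  obtain A where A: "A \<ge> 1" "\<And>t. t \<ge> 0 \<Longrightarrow> omega_f f t \<le> ennreal (A * t) \<and> rho_f f t \<ge> ennreal (t / A)"
    using bl unfolding bi_lipschitz_embedding_def by blast
  have up: "dist (f x) (f y) \<le> A * dist x y" for x y
  proof -
    have "ennreal (dist (f x) (f y)) \<le> omega_f f (dist x y)" by (rule omega_use) simp
    also have "\<dots> \<le> ennreal (A * dist x y)" using A(2)[of "dist x y"] by simp
    finally show ?thesis using A by (subst (asm) ennreal_le_iff) auto
  qed
  have lo: "dist x y \<le> A * dist (f x) (f y)" for x y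
  proof -
    have "ennreal (dist x y / A) \<le> rho_f f (dist x y)" using A(2)[of "dist x y"] by simp
    also have "\<dots> \<le> ennreal (dist (f x) (f y))" by (rule rho_use) simp
    finally have "dist x y / A \<le> dist (f x) (f y)" by (subst (asm) ennreal_le_iff) auto
    thus ?thesis using A by (simp add: field_simps)
  qed
  have LA: "Lip f \<le> ennreal A" unfolding Lip_def
  proof (rule SUP_least, clarsimp)
    fix x y :: 'a assume "x \<noteq> y"
    hence "dist x y > 0" by simp
    hence "dist (f x) (f y) / dist x y \<le> A" using up[of x y] by (simp add: divide_le_eq mult.commute)
    thus "ennreal (dist (f x) (f y) / dist x y) \<le> ennreal A" by (rule ennreal_leI)
  qed
  have MA: "Lip_inv f \<le> ennreal A" unfolding Lip_inv_def
  proof (rule SUP_least, clarsimp)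
    fix x y :: 'a assume "x \<noteq> y"
    hence "dist x y > 0" by simp
    hence "dist (f x) (f y) > 0" using lo[of x y] A zero_le_dist[of "f x" "f y"]
      by (cases "dist (f x) (f y) = 0") auto
    hence "dist x y / dist (f x) (f y) \<le> A" using lo[of x y] by (simp add: divide_le_eq mult.commute)
    thus "ennreal (dist x y / dist (f x) (f y)) \<le> ennreal A" by (rule ennreal_leI)
  qed
  define l where "l = enn2real (Lip f)"
  define m where "m = enn2real (Lip_inv f)"
  have Ll: "Lip f = ennreal l" unfolding l_def using LA by (simp add: le_less_trans less_top)
  have Mm: "Lip_inv f = ennreal m" unfolding m_def using MA by (simp add: le_less_trans less_top)
  have l0: "l \<ge> 0" and m0: "m \<ge> 0" unfolding l_def m_def by auto
  have upl: "dist (f x) (f y) \<le> l * dist x y" for x y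
  proof (cases "x = y")
    case False
    hence d: "dist x y > 0" by simp
    have "ennreal (dist (f x) (f y) / dist x y) \<le> Lip f"
      unfolding Lip_def by (rule SUP_upper2[where i="(x,y)"]) (use False in auto)
    hence "dist (f x) (f y) / dist x y \<le> l" using Ll l0 by (simp add: ennreal_le_iff)
    thus ?thesis using d by (simp add: divide_le_eq mult.commute)
  qed simp
  have lom: "dist x y \<le> m * dist (f x) (f y)" for x y
  proof (cases "x = y")
    case False
    hence "dist x y > 0" by simp
    hence d: "dist (f x) (f y) > 0" using lo[of x y] A zero_le_dist[of "f x" "f y"]
      by (cases "dist (f x) (f y) = 0") auto
    have "ennreal (dist x y / dist (f x) (f y)) \<le> Lip_inv f"
      unfolding Lip_inv_def by (rule SUP_upper2[where i="(x,y)"]) (use False in auto)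
    hence "dist x y / dist (f x) (f y) \<le> m" using Mm m0 by (simp add: ennreal_le_iff)
    thus ?thesis using d by (simp add: divide_le_eq mult.commute)
  qed simp
  have main: "Delta_c (UNIV :: 'a set) R \<le> ennreal (m * C * l * R + (m * C + m) * e)" if e: "e > 0" for e
  proof -
    define w where "w = l * R"
    have w0: "w \<ge> 0" using l0 R unfolding w_def by simp
    have om: "\<forall>x y. dist x y < R \<longrightarrow> dist (f x) (f y) \<le> w"
    proof (intro allI impI)
      fix x y :: 'a assume "dist x y < R"
      have "dist (f x) (f y) \<le> l * dist x y" by (rule upl)
      also have "\<dots> \<le> l * R" using l0 \<open>dist x y < R\<close> by (intro mult_left_mono) auto
      finally show "dist (f x) (f y) \<le> w" unfolding w_def .
    qed
    define S where "S = C * (w + e) + e"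
    have S0: "S \<ge> 0" using C w0 e unfolding S_def by simp
    have DS: "Delta_c (UNIV::'b set) (w+e) < ennreal S"
    proof -
      have "Delta_c (UNIV::'b set) (w+e) \<le> ennreal (C * (w+e))" using DY w0 e by auto
      also have "\<dots> < ennreal S" unfolding S_def by (rule ennreal_lessI) (use C w0 e in \<open>auto intro!: add_nonneg_pos\<close>)
      finally show ?thesis .
    qed
    have rh: "\<forall>x y. dist (f x) (f y) \<le> S \<longrightarrow> dist x y \<le> m * S"
    proof (intro allI impI)
      fix x y :: 'a assume h: "dist (f x) (f y) \<le> S"
      have "dist x y \<le> m * dist (f x) (f y)" by (rule lom)
      also have "\<dots> \<le> m * S" using h m0 by (intro mult_left_mono)
      finally show "dist x y \<le> m * S" .
    qed
    have "Delta_c (UNIV::'a set) R \<le> ennreal (m * S)" by (rule transfer[OF R w0 _ om DS S0 rh]) (use e in simp)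
    also have "m * S = m * C * l * R + (m * C + m) * e" unfolding S_def w_def by (simp add: algebra_simps)
    finally show ?thesis .
  qed
  have "Delta_c (UNIV :: 'a set) R \<le> ennreal (m * C * l * R)"
    by (rule eps_limit[OF main]) (use m0 C l0 R in auto)
  also have "ennreal (m * C * l * R) = ennreal C * distortion f * ennreal R"
    unfolding distortion_def Ll Mm using m0 C l0 R by (simp add: ennreal_mult'[symmetric] ennreal_mult[symmetric] mult_ac)
  finally show ?thesis .
qed

theorem proposition3p9:
  fixes f :: "'a::metric_space \<Rightarrow> 'b::metric_space"
  shows "(coarse_stone (UNIV :: 'b set) \<and> coarse_embedding f
            \<longrightarrow> coarse_stone (UNIV :: 'a set))
       \<and> (coarse_lipschitz_embedding f \<and>
          (\<exists>C D. C \<ge> 0 \<and> D \<ge> 0 \<and> (\<forall>R\<ge>0. Delta_c (UNIV :: 'b set) R \<le> ennreal (C * R + D)))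
            \<longrightarrow> (\<exists>C' D'. C' \<ge> 0 \<and> D' \<ge> 0 \<and>
                   (\<forall>R\<ge>0. Delta_c (UNIV :: 'a set) R < ennreal (C' * R + D'))))
       \<and> (\<forall>C. C \<ge> 0 \<and> bi_lipschitz_embedding f \<and>
               (\<forall>R\<ge>0. Delta_c (UNIV :: 'b set) R \<le> ennreal (C * R))
            \<longrightarrow> (\<forall>R\<ge>0. Delta_c (UNIV :: 'a set) R \<le> ennreal C * distortion f * ennreal R))"
  using part1[of f] part2[of f] part3[of _ f] by blast

end
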